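(* Let $T$ be a monad on $\mathsf{Set}$ which is continuous and commutative (in the senses described in the context). Then for every $n\in\mathbb{N}\cup\{\omega\}$, every $\Gamma\in T([n])$ and every set $X$, we have $\Gamma\mathrel{>\!\!>=}(i\mapsto\bot_{T(X)})=\bot_{T(X)}$, where $\bot_{T(X)}$ is the least element of $T(X)$.
   Context: $[n]=\{1,\dots,n\}$ for $n\in\mathbb{N}$, $[\omega]=\mathbb{N}$. For $\mu\in T(X)$ and $f:X\to T(Y)$, $\mu\mathrel{>\!\!>=} f$ is the Kleisli extension of $f$ applied to $\mu$. $T$ is continuous if every $T(X)$ carries an $\omega$-cppo structure (a partial order with least element $\bot_{T(X)}$ and suprema of $\omega$-chains) such that $\mathrel{>\!\!>=}$ is continuous in both arguments (ordering functions $X\to T(Y)$ pointwise). Standing assumptions of the paper in this setting: $\eta(1)\neq\bot$ in $T([1])$ (so $T([1])$ has at least two elements), and for every function $f$ the map $T(f)$ is strict, i.e. preserves least elements. $T$ is commutative if for all $n,m\in\mathbb{N}\cup\{\omega\}$, all $\Gamma\in T([n])$, $\Delta\in T([m])$, all sets $X$ and all $x_{i,j}\in X$ ($i\in[n]$, $j\in[m]$): $\Gamma\mathrel{>\!\!>=}(i\mapsto \Delta\mathrel{>\!\!>=}(j\mapsto\eta(x_{i,j})))=\Delta\mathrel{>\!\!>=}(j\mapsto\Gamma\mathrel{>\!\!>=}(i\mapsto\eta(x_{i,j})))$. *)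

theory Defs
  imports Main "HOL-Library.FuncSet" "HOL-Library.Extended_Nat"
begin

text \<open>
  A monad on Set is represented as a Kleisli triple acting on all sets
  X :: 'u set of a universe type 'u:
    TT X             -- the carrier of T(X), a subset of the value type 'v
    eta X x          -- the unit eta_X(x), for x in X
    bind X Y mu f    -- Kleisli extension of f : X -> T(Y) applied to mu in T(X)
  The order on T(X) is le X, its least element is bt X.
  The natural numbers are embedded into the universe by an injection emb,
  and [n] for n in N u {omega} is emb ` {i. 1 <= i <= n}.
\<close>

definition idx :: "(nat \<Rightarrow> 'u) \<Rightarrow> enat \<Rightarrow> 'u set" where
  "idx emb n = emb ` {i. 1 \<le> i \<and> enat i \<le> n}"

definition kleisli_monad ::
  "('u set \<Rightarrow> 'v set) \<Rightarrow> ('u set \<Rightarrow> 'u \<Rightarrow> 'v)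
   \<Rightarrow> ('u set \<Rightarrow> 'u set \<Rightarrow> 'v \<Rightarrow> ('u \<Rightarrow> 'v) \<Rightarrow> 'v) \<Rightarrow> bool" where
  "kleisli_monad TT eta bind \<longleftrightarrow>
     (\<forall>X. eta X \<in> X \<rightarrow> TT X)
   \<and> (\<forall>X Y mu f. mu \<in> TT X \<and> f \<in> X \<rightarrow> TT Y \<longrightarrow> bind X Y mu f \<in> TT Y)
   \<and> (\<forall>X Y mu f g. mu \<in> TT X \<and> f \<in> X \<rightarrow> TT Y \<and> (\<forall>x\<in>X. f x = g x)
        \<longrightarrow> bind X Y mu f = bind X Y mu g)
   \<and> (\<forall>X Y x f. x \<in> X \<and> f \<in> X \<rightarrow> TT Y \<longrightarrow> bind X Y (eta X x) f = f x)
   \<and> (\<forall>X mu. mu \<in> TT X \<longrightarrow> bind X X mu (eta X) = mu)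
   \<and> (\<forall>X Y Z mu f g. mu \<in> TT X \<and> f \<in> X \<rightarrow> TT Y \<and> g \<in> Y \<rightarrow> TT Z \<longrightarrow>
        bind Y Z (bind X Y mu f) g = bind X Z mu (\<lambda>x. bind Y Z (f x) g))"

definition is_chain :: "'v set \<Rightarrow> ('v \<Rightarrow> 'v \<Rightarrow> bool) \<Rightarrow> (nat \<Rightarrow> 'v) \<Rightarrow> bool" where
  "is_chain A le c \<longleftrightarrow> (\<forall>i. c i \<in> A) \<and> (\<forall>i. le (c i) (c (Suc i)))"

definition is_lub :: "'v set \<Rightarrow> ('v \<Rightarrow> 'v \<Rightarrow> bool) \<Rightarrow> 'v set \<Rightarrow> 'v \<Rightarrow> bool" where
  "is_lub A le S s \<longleftrightarrow> s \<in> A \<and> (\<forall>x\<in>S. le x s) \<and> (\<forall>u\<in>A. (\<forall>x\<in>S. le x u) \<longrightarrow> le s u)"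

definition omega_cppo :: "'v set \<Rightarrow> ('v \<Rightarrow> 'v \<Rightarrow> bool) \<Rightarrow> 'v \<Rightarrow> bool" where
  "omega_cppo A le b \<longleftrightarrow>
     (\<forall>x\<in>A. le x x)
   \<and> (\<forall>x\<in>A. \<forall>y\<in>A. le x y \<and> le y x \<longrightarrow> x = y)
   \<and> (\<forall>x\<in>A. \<forall>y\<in>A. \<forall>z\<in>A. le x y \<and> le y z \<longrightarrow> le x z)
   \<and> b \<in> A \<and> (\<forall>x\<in>A. le b x)
   \<and> (\<forall>c. is_chain A le c \<longrightarrow> (\<exists>s. is_lub A le (range c) s))"

definition continuous_monad ::
  "('u set \<Rightarrow> 'v set) \<Rightarrow> ('u set \<Rightarrow> 'u set \<Rightarrow> 'v \<Rightarrow> ('u \<Rightarrow> 'v) \<Rightarrow> 'v)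
   \<Rightarrow> ('u set \<Rightarrow> 'v \<Rightarrow> 'v \<Rightarrow> bool) \<Rightarrow> ('u set \<Rightarrow> 'v) \<Rightarrow> bool" where
  "continuous_monad TT bind le bt \<longleftrightarrow>
     (\<forall>X. omega_cppo (TT X) (le X) (bt X))
   \<and> (\<forall>X Y f c s. f \<in> X \<rightarrow> TT Y \<and> is_chain (TT X) (le X) c \<and> is_lub (TT X) (le X) (range c) s
        \<longrightarrow> is_lub (TT Y) (le Y) (range (\<lambda>i. bind X Y (c i) f)) (bind X Y s f))
   \<and> (\<forall>X Y mu g h. mu \<in> TT X \<and> (\<forall>i. g i \<in> X \<rightarrow> TT Y) \<and> h \<in> X \<rightarrow> TT Y
        \<and> (\<forall>x\<in>X. is_chain (TT Y) (le Y) (\<lambda>i. g i x) \<and> is_lub (TT Y) (le Y) (range (\<lambda>i. g i x)) (h x))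
        \<longrightarrow> is_lub (TT Y) (le Y) (range (\<lambda>i. bind X Y mu (g i))) (bind X Y mu h))"

definition standing_assumptions ::
  "(nat \<Rightarrow> 'u) \<Rightarrow> ('u set \<Rightarrow> 'v set) \<Rightarrow> ('u set \<Rightarrow> 'u \<Rightarrow> 'v)
   \<Rightarrow> ('u set \<Rightarrow> 'u set \<Rightarrow> 'v \<Rightarrow> ('u \<Rightarrow> 'v) \<Rightarrow> 'v) \<Rightarrow> ('u set \<Rightarrow> 'v) \<Rightarrow> bool" where
  "standing_assumptions emb TT eta bind bt \<longleftrightarrow>
     eta (idx emb 1) (emb 1) \<noteq> bt (idx emb 1)
   \<and> (\<forall>X Y f. f \<in> X \<rightarrow> Y \<longrightarrow> bind X Y (bt X) (\<lambda>x. eta Y (f x)) = bt Y)"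

definition commutative_monad ::
  "(nat \<Rightarrow> 'u) \<Rightarrow> ('u set \<Rightarrow> 'v set) \<Rightarrow> ('u set \<Rightarrow> 'u \<Rightarrow> 'v)
   \<Rightarrow> ('u set \<Rightarrow> 'u set \<Rightarrow> 'v \<Rightarrow> ('u \<Rightarrow> 'v) \<Rightarrow> 'v) \<Rightarrow> bool" where
  "commutative_monad emb TT eta bind \<longleftrightarrow>
     (\<forall>n m Gamma Delta X x.
        Gamma \<in> TT (idx emb n) \<and> Delta \<in> TT (idx emb m)
        \<and> (\<forall>i\<in>idx emb n. \<forall>j\<in>idx emb m. x i j \<in> X) \<longrightarrow>
        bind (idx emb n) X Gamma (\<lambda>i. bind (idx emb m) X Delta (\<lambda>j. eta X (x i j)))
      = bind (idx emb m) X Delta (\<lambda>j. bind (idx emb n) X Gamma (\<lambda>i. eta X (x i j))))"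

end

theory Submission
  imports Defs
begin

lemma km_bind: "kleisli_monad TT eta bind \<Longrightarrow> mu \<in> TT X \<Longrightarrow> f \<in> X \<rightarrow> TT Y \<Longrightarrow> bind X Y mu f \<in> TT Y"
  unfolding kleisli_monad_def by (elim conjE, drule spec, drule spec, drule spec, drule spec, erule mp, rule conjI)
lemma km_cong: "kleisli_monad TT eta bind \<Longrightarrow> mu \<in> TT X \<Longrightarrow> f \<in> X \<rightarrow> TT Y \<Longrightarrow> (\<forall>x\<in>X. f x = g x) \<Longrightarrow> bind X Y mu f = bind X Y mu g"
  unfolding kleisli_monad_def apply (elim conjE) apply (drule spec[where x=X], drule spec[where x=Y], drule spec[where x=mu], drule spec[where x=f], drule spec[where x=g]) by simp
lemma km_assoc: "kleisli_monad TT eta bind \<Longrightarrow> mu \<in> TT X \<Longrightarrow> f \<in> X \<rightarrow> TT Y \<Longrightarrow> g \<in> Y \<rightarrow> TT Z \<Longrightarrow>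
        bind Y Z (bind X Y mu f) g = bind X Z mu (\<lambda>x. bind Y Z (f x) g)"
  unfolding kleisli_monad_def apply (elim conjE) 
  apply (drule spec[where x=X], drule spec[where x=Y], drule spec[where x=Z], drule spec[where x=mu], drule spec[where x=f], drule spec[where x=g]) by simp
lemma km_eta: "kleisli_monad TT eta bind \<Longrightarrow> eta X \<in> X \<rightarrow> TT X"
  unfolding kleisli_monad_def by simp
lemma cm_bt: "continuous_monad TT bind le bt \<Longrightarrow> bt X \<in> TT X"
  unfolding continuous_monad_def omega_cppo_def by simp

lemma sa_strict: "standing_assumptions emb TT eta bind bt \<Longrightarrow> g \<in> A \<rightarrow> B \<Longrightarrow> bind A B (bt A) (\<lambda>x. eta B (g x)) = bt B"
  unfolding standing_assumptions_def by simp

lemma left_strict: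
  assumes km: "kleisli_monad TT eta bind"
    and cm: "continuous_monad TT bind le bt"
    and sa: "standing_assumptions emb TT eta bind bt"
    and f: "f \<in> X \<rightarrow> TT Y"
  shows "bind X Y (bt X) f = bt Y"
proof -
  have bt: "\<And>Z. bt Z \<in> TT Z" using cm_bt[OF cm] .
  have str: "\<And>A B g. g \<in> A \<rightarrow> B \<Longrightarrow> bind A B (bt A) (\<lambda>x. eta B (g x)) = bt B"
    using sa_strict[OF sa] .
  have e1: "bt X = bind {} X (bt {}) (\<lambda>x. eta X x)"
    using str[of "\<lambda>x. x" "{}" X] by simp
  have assoc: "bind X Y (bind {} X (bt {}) (eta X)) f
      = bind {} Y (bt {}) (\<lambda>x. bind X Y (eta X x) f)"
    by (rule km_assoc[OF km bt _ f]) auto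
  have cong: "bind {} Y (bt {}) (\<lambda>x. bind X Y (eta X x) f) = bind {} Y (bt {}) (\<lambda>x. eta Y x)"
    by (rule km_cong[OF km bt]) auto
  have "bind {} Y (bt {}) (\<lambda>x. eta Y x) = bt Y" using str[of "\<lambda>x. x" "{}" Y] by simp
  then show ?thesis using e1 assoc cong by simp
qed

theorem proposition5p14:
  fixes emb :: "nat \<Rightarrow> 'u"
    and TT :: "'u set \<Rightarrow> 'v set"
    and eta :: "'u set \<Rightarrow> 'u \<Rightarrow> 'v"
    and bind :: "'u set \<Rightarrow> 'u set \<Rightarrow> 'v \<Rightarrow> ('u \<Rightarrow> 'v) \<Rightarrow> 'v"
    and le :: "'u set \<Rightarrow> 'v \<Rightarrow> 'v \<Rightarrow> bool"
    and bt :: "'u set \<Rightarrow> 'v"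
  assumes "inj emb"
    and "kleisli_monad TT eta bind"
    and "continuous_monad TT bind le bt"
    and "standing_assumptions emb TT eta bind bt"
    and "commutative_monad emb TT eta bind"
  shows "\<forall>(n::enat) Gamma (X::'u set). Gamma \<in> TT (idx emb n) \<longrightarrow>
           bind (idx emb n) X Gamma (\<lambda>i. bt X) = bt X"
proof (intro allI impI)
  fix n :: enat and Gamma and X :: "'u set"
  assume G: "Gamma \<in> TT (idx emb n)"
  note km = assms(2) and cm = assms(3) and sa = assms(4)
  have bt: "\<And>Z. bt Z \<in> TT Z" using cm_bt[OF cm] .
  have eta: "\<And>Z. eta Z \<in> Z \<rightarrow> TT Z" using km_eta[OF km] .
  define O1 where "O1 = idx emb 1"
  have e1: "emb 1 \<in> O1" unfolding O1_def idx_def by (auto simp: one_enat_def)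
  have etae: "eta O1 (emb 1) \<in> TT O1" using eta e1 by blast
  have comm: "bind (idx emb n) O1 Gamma (\<lambda>i. bind O1 O1 (bt O1) (\<lambda>j. eta O1 (emb 1)))
      = bind O1 O1 (bt O1) (\<lambda>j. bind (idx emb n) O1 Gamma (\<lambda>i. eta O1 (emb 1)))"
  proof -
    have "\<forall>n m Gamma Delta X x.
        Gamma \<in> TT (idx emb n) \<and> Delta \<in> TT (idx emb m)
        \<and> (\<forall>i\<in>idx emb n. \<forall>j\<in>idx emb m. x i j \<in> X) \<longrightarrow>
        bind (idx emb n) X Gamma (\<lambda>i. bind (idx emb m) X Delta (\<lambda>j. eta X (x i j)))
      = bind (idx emb m) X Delta (\<lambda>j. bind (idx emb n) X Gamma (\<lambda>i. eta X (x i j)))"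
      using assms(5) unfolding commutative_monad_def .
    from spec[OF spec[OF spec[OF spec[OF spec[OF spec[OF this, of n], of 1], of Gamma], of "bt O1"], of O1], of "\<lambda>i j. emb 1"]
    show ?thesis using G bt e1 unfolding O1_def by blast
  qed
  have l1: "bind O1 O1 (bt O1) (\<lambda>j. eta O1 (emb 1)) = bt O1"
    by (rule left_strict[OF km cm sa]) (use etae in auto)
  have inT: "bind (idx emb n) O1 Gamma (\<lambda>i. eta O1 (emb 1)) \<in> TT O1"
    by (rule km_bind[OF km G]) (use etae in auto)
  have l2: "bind O1 O1 (bt O1) (\<lambda>j. bind (idx emb n) O1 Gamma (\<lambda>i. eta O1 (emb 1))) = bt O1"
    by (rule left_strict[OF km cm sa]) (use inT in auto)
  have step1: "bind (idx emb n) O1 Gamma (\<lambda>i. bt O1) = bt O1"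
    using comm l1 l2 by simp
  have l3: "bind O1 X (bt O1) (\<lambda>j. bt X) = bt X"
    by (rule left_strict[OF km cm sa]) (use bt in auto)
  have assoc: "bind O1 X (bind (idx emb n) O1 Gamma (\<lambda>i. bt O1)) (\<lambda>j. bt X)
     = bind (idx emb n) X Gamma (\<lambda>i. bind O1 X (bt O1) (\<lambda>j. bt X))"
    by (rule km_assoc[OF km G]) (use bt in auto)
  show "bind (idx emb n) X Gamma (\<lambda>i. bt X) = bt X"
    using assoc step1 l3 by simp
qed

end
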